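(* For any $0\le\epsilon<1$ and any integer $m>1$, $$\rho\Big((1-\epsilon)|\Psi\rangle\langle\Psi|+\epsilon\,\frac{\mathrm{id}_m}{m}\otimes\frac{\mathrm{id}_m}{m}\Big)=1-\epsilon,$$ where $|\Psi\rangle=\frac1{\sqrt m}\sum_{i=0}^{m-1}|i,i\rangle$ is the $m$-dimensional maximally entangled state.
   Context: For a bipartite state $\psi_{AB}$ on $\mathbb{C}^{m}\otimes\mathbb{C}^{m}$ with $\psi_A=\psi_B=\mathrm{id}_m/m$, its maximal correlation is $\rho(\psi_{AB})=\sup\{|\mathrm{Tr}((P^\dagger\otimes Q)\psi_{AB})|: P,Q\in\mathcal{M}_m,\ \mathrm{Tr}P=\mathrm{Tr}Q=0,\ \tfrac1m\mathrm{Tr}P^\dagger P=\tfrac1m\mathrm{Tr}Q^\dagger Q=1\}$, where $\mathcal{M}_m$ is the space of complex $m\times m$ matrices. *)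

theory Defs
  imports Complex_Main "Jordan_Normal_Form.Matrix"
begin

definition adj :: "complex mat \<Rightarrow> complex mat" where
  "adj A = mat (dim_col A) (dim_row A) (\<lambda>(i,j). cnj (A $$ (j,i)))"

text \<open>Kronecker (tensor) product; basis index i * dim + j corresponds to |i> (x) |j>.\<close>
definition kron :: "complex mat \<Rightarrow> complex mat \<Rightarrow> complex mat" where
  "kron A B = mat (dim_row A * dim_row B) (dim_col A * dim_col B)
     (\<lambda>(i,j). A $$ (i div dim_row B, j div dim_col B) * B $$ (i mod dim_row B, j mod dim_col B))"

definition max_ent :: "nat \<Rightarrow> complex vec" where
  "max_ent m = vec (m * m) (\<lambda>k. if k div m = k mod m then complex_of_real (1 / sqrt (real m)) else 0)"

definition proj :: "complex vec \<Rightarrow> complex mat" where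
  "proj v = mat (dim_vec v) (dim_vec v) (\<lambda>(i,j). v $ i * cnj (v $ j))"

definition mtrace :: "complex mat \<Rightarrow> complex" where
  "mtrace A = (\<Sum>i<dim_row A. A $$ (i,i))"

text \<open>Maximal correlation of a bipartite state on C^m (x) C^m (with maximally mixed marginals).\<close>
definition max_corr :: "nat \<Rightarrow> complex mat \<Rightarrow> real" where
  "max_corr m \<psi> = Sup {cmod (mtrace (kron (adj P) Q * \<psi>)) | P Q.
      P \<in> carrier_mat m m \<and> Q \<in> carrier_mat m m \<and> mtrace P = 0 \<and> mtrace Q = 0 \<and>
      mtrace (adj P * P) / of_nat m = 1 \<and> mtrace (adj Q * Q) / of_nat m = 1}"

end

theory Submission
  imports Defs
begin

lemma sum_split_nat: "(\<Sum>k<m*n. f k) = (\<Sum>a<m. \<Sum>b<n. f (a*n+b :: nat))"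
proof (induction m)
  case 0 then show ?case by simp
next
  case (Suc m)
  have "(\<Sum>k<Suc m*n. f k) = (\<Sum>k\<in>{0..<m*n+n}. f k)" by (simp add: lessThan_atLeast0 add.commute)
  also have "\<dots> = (\<Sum>k\<in>{0..<m*n}. f k) + (\<Sum>k\<in>{m*n..<m*n+n}. f k)"
    by (rule sum.atLeastLessThan_concat[symmetric]) auto
  also have "(\<Sum>k\<in>{m*n..<m*n+n}. f k) = (\<Sum>b<n. f (m*n+b))"
    by (subst sum.atLeastLessThan_shift_0) (simp add: lessThan_atLeast0)
  finally show ?case using Suc by (simp add: lessThan_atLeast0)
qed

lemma trace_mult: assumes "A \<in> carrier_mat n k" "B \<in> carrier_mat k n"
  shows "mtrace (A * B) = (\<Sum>i<n. \<Sum>j<k. A $$ (i,j) * B $$ (j,i))"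
  using assms unfolding mtrace_def
  by (auto simp: scalar_prod_def intro!: sum.cong simp: lessThan_atLeast0)

lemma adj_carrier[simp]: "P \<in> carrier_mat m m \<Longrightarrow> adj P \<in> carrier_mat m m"
  by (auto simp: adj_def)

lemma adj_index[simp]: "P \<in> carrier_mat m m \<Longrightarrow> i < m \<Longrightarrow> j < m \<Longrightarrow> adj P $$ (i,j) = cnj (P $$ (j,i))"
  by (auto simp: adj_def)

lemma Re_cnj_sq: "Re (cnj z * z) = cmod z ^ 2"
  by (metis Re_complex_of_real complex_norm_square mult.commute)

lemma trace_adj: assumes "P \<in> carrier_mat m m"
  shows "Re (mtrace (adj P * P)) = (\<Sum>i<m. \<Sum>j<m. (cmod (P $$ (j,i)))^2)"
proof -
  have "mtrace (adj P * P) = (\<Sum>i<m. \<Sum>j<m. cnj (P $$ (j,i)) * P $$ (j,i))"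
    using assms by (subst trace_mult[of _ m m]) auto
  also have "Re \<dots> = (\<Sum>i<m. \<Sum>j<m. (cmod (P $$ (j,i)))^2)"
    using Re_cnj_sq by (simp add: Re_sum)
  finally show ?thesis by simp
qed

lemma kron_index: assumes "A \<in> carrier_mat m m" "B \<in> carrier_mat m m" "i < m*m" "k < m*m"
  shows "kron A B $$ (i,k) = A $$ (i div m, k div m) * B $$ (i mod m, k mod m)"
  using assms by (simp add: kron_def)

lemma idx_lt: assumes "a < m" "b < (m::nat)" shows "a*m+b < m*m"
proof -
  have "a*m+b < a*m+m" using assms by simp
  also have "\<dots> = (a+1)*m" by simp
  also have "\<dots> \<le> m*m" using assms by (intro mult_right_mono) auto
  finally show ?thesis .
qed

lemma kron_index2: assumes "A \<in> carrier_mat m m" "B \<in> carrier_mat m m" "a < m" "b < m" "c < m" "d < m"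
  shows "kron A B $$ (a*m+b, c*m+d) = A $$ (a, c) * B $$ (b, d)"
  using assms by (simp add: kron_index idx_lt)

lemma kron_carrier: assumes "A \<in> carrier_mat m m" "B \<in> carrier_mat m m"
  shows "kron A B \<in> carrier_mat (m*m) (m*m)"
  using assms by (simp add: kron_def)

lemma psi_index:
  fixes e :: real
  assumes "i < m*m" "k < m*m" "m > 0"
  shows "(complex_of_real (1 - e) \<cdot>\<^sub>m proj (max_ent m)
      + complex_of_real e \<cdot>\<^sub>m kron ((1 / of_nat m) \<cdot>\<^sub>m 1\<^sub>m m) ((1 / of_nat m) \<cdot>\<^sub>m 1\<^sub>m m)) $$ (k,i)
   = complex_of_real (1 - e) * (if k div m = k mod m then complex_of_real (1 / sqrt (real m)) else 0)
       * cnj (if i div m = i mod m then complex_of_real (1 / sqrt (real m)) else 0)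
     + complex_of_real e * (if k = i then 1 / (of_nat m * of_nat m) else 0)"
proof -
  have dm: "k div m < m" "i div m < m" using assms by (auto simp: less_mult_imp_div_less)
  have eq: "(k = i) = (k div m = i div m \<and> k mod m = i mod m)"
    by (metis div_mult_mod_eq)
  show ?thesis using assms dm
    by (auto simp: kron_def proj_def max_ent_def eq)
qed

lemma if_mult0: "x * (if P then y else 0) = (if P then x * y else (0::complex))"
  "(if P then y else 0) * x = (if P then y * x else (0::complex))"
  "cnj (if P then y else 0) = (if P then cnj y else 0)"
  by auto

lemma main_formula:
  fixes e :: real
  assumes P: "P \<in> carrier_mat m m" and Q: "Q \<in> carrier_mat m m" and tP: "mtrace P = 0" and m: "m > 0"
  shows "mtrace (kron (adj P) Q * (complex_of_real (1 - e) \<cdot>\<^sub>m proj (max_ent m)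
      + complex_of_real e \<cdot>\<^sub>m kron ((1 / of_nat m) \<cdot>\<^sub>m 1\<^sub>m m) ((1 / of_nat m) \<cdot>\<^sub>m 1\<^sub>m m)))
    = complex_of_real ((1 - e) / m) * (\<Sum>a<m. \<Sum>b<m. cnj (P $$ (b,a)) * Q $$ (a,b))"
  (is "mtrace (?K * ?psi) = _")
proof -
  define s where "s = complex_of_real (1 / sqrt (real m))"
  define v where "v = (\<lambda>k. if k div m = k mod m then s else (0::complex))"
  have Kc: "?K \<in> carrier_mat (m*m) (m*m)" using P Q by (simp add: kron_carrier)
  have psic: "?psi \<in> carrier_mat (m*m) (m*m)" by (simp add: kron_def proj_def max_ent_def)
  have "mtrace (?K * ?psi) = (\<Sum>i<m*m. \<Sum>k<m*m. ?K $$ (i,k) * ?psi $$ (k,i))"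
    by (rule trace_mult[OF Kc psic])
  also have "\<dots> = (\<Sum>i<m*m. \<Sum>k<m*m. ?K $$ (i,k) * (complex_of_real (1 - e) * v k * cnj (v i)
     + complex_of_real e * (if k = i then 1 / (of_nat m * of_nat m) else 0)))"
    apply (intro sum.cong refl)
    apply (subst psi_index[OF _ _ m])
      apply simp
     apply simp
    apply (simp only: v_def s_def)
    done
  also have "\<dots> = (\<Sum>i<m*m. \<Sum>k<m*m. ?K $$ (i,k) * (complex_of_real (1 - e) * v k * cnj (v i)))
     + (\<Sum>i<m*m. \<Sum>k<m*m. ?K $$ (i,k) * (complex_of_real e * (if k = i then 1 / (of_nat m * of_nat m) else 0)))"
    by (simp only: distrib_left sum.distrib)
  also have "(\<Sum>i<m*m. \<Sum>k<m*m. ?K $$ (i,k) * (complex_of_real e * (if k = i then 1 / (of_nat m * of_nat m) else 0)))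
     = complex_of_real e / (of_nat m * of_nat m) * (\<Sum>i<m*m. ?K $$ (i,i))"
    by (simp add: sum_distrib_left mult_ac if_distrib sum.delta cong: if_cong)
  also have "(\<Sum>i<m*m. ?K $$ (i,i)) = (\<Sum>a<m. \<Sum>b<m. cnj (P $$ (a,a)) * Q $$ (b,b))"
    using P Q by (simp add: sum_split_nat kron_index2)
  also have "\<dots> = 0" using tP P by (simp add: sum_product[symmetric] mtrace_def del: cnj_sum flip: cnj_sum)
  also have "(\<Sum>i<m*m. \<Sum>k<m*m. ?K $$ (i,k) * (complex_of_real (1 - e) * v k * cnj (v i)))
     = (\<Sum>a<m. \<Sum>b<m. \<Sum>c<m. \<Sum>d<m. cnj (P $$ (c,a)) * Q $$ (b,d) *
          (complex_of_real (1 - e) * (if c = d then s else 0) * cnj (if a = b then s else 0)))"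
    using P Q by (simp add: sum_split_nat kron_index2 v_def)
  also have "\<dots> = (\<Sum>a<m. \<Sum>c<m. cnj (P $$ (c,a)) * Q $$ (a,c) *
          (complex_of_real (1 - e) * s * cnj s))"
  proof -
    have "(\<Sum>a<m. \<Sum>b<m. \<Sum>c<m. \<Sum>d<m. cnj (P $$ (c,a)) * Q $$ (b,d) *
          (complex_of_real (1 - e) * (if c = d then s else 0) * cnj (if a = b then s else 0)))
      = (\<Sum>a<m. \<Sum>b<m. if b = a then (\<Sum>c<m. \<Sum>d<m. if d = c then cnj (P $$ (c,a)) * Q $$ (a,c) *
          (complex_of_real (1 - e) * s * cnj s) else 0) else 0)"
      by (intro sum.cong refl) (auto simp: if_mult0 sum.delta sum.delta' intro!: sum.cong)
    also have "\<dots> = (\<Sum>a<m. \<Sum>c<m. cnj (P $$ (c,a)) * Q $$ (a,c) *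
          (complex_of_real (1 - e) * s * cnj s))"
      by (simp add: sum.delta sum.delta')
    finally show ?thesis .
  qed
  finally have fin: "mtrace (?K * ?psi) = (\<Sum>a<m. \<Sum>c<m. cnj (P $$ (c,a)) * Q $$ (a,c) *
          (complex_of_real (1 - e) * s * cnj s)) + complex_of_real e / (of_nat m * of_nat m) * 0" .
  have sc: "s * cnj s = complex_of_real (1 / m)"
    unfolding s_def using m by (simp flip: of_real_mult)
  have sc2: "complex_of_real (1 - e) * s * cnj s = complex_of_real ((1 - e) / m)"
    by (simp only: mult.assoc sc flip: of_real_mult) simp
  show ?thesis unfolding fin sc2
    by (simp add: sum_distrib_left mult_ac)
qed

lemma norm_sq_sum: assumes P: "P \<in> carrier_mat m m" and h: "mtrace (adj P * P) / of_nat m = 1" and m: "m > 0"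
  shows "(\<Sum>i<m. \<Sum>j<m. (cmod (P $$ (j,i)))^2) = real m"
proof -
  have "mtrace (adj P * P) = of_nat m" using h m by (simp add: field_simps)
  then show ?thesis using trace_adj[OF P] by simp
qed

lemma S_bound:
  assumes P: "P \<in> carrier_mat m m" and hP: "mtrace (adj P * P) / of_nat m = 1"
    and Q: "Q \<in> carrier_mat m m" and hQ: "mtrace (adj Q * Q) / of_nat m = 1" and m: "m > 0"
  shows "cmod (\<Sum>a<m. \<Sum>b<m. cnj (P $$ (b,a)) * Q $$ (a,b)) \<le> real m"
proof -
  have "cmod (\<Sum>a<m. \<Sum>b<m. cnj (P $$ (b,a)) * Q $$ (a,b))
      \<le> (\<Sum>a<m. \<Sum>b<m. cmod (cnj (P $$ (b,a)) * Q $$ (a,b)))"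
    by (rule order.trans[OF norm_sum sum_mono[OF norm_sum]])
  also have "\<dots> \<le> (\<Sum>a<m. \<Sum>b<m. ((cmod (P $$ (b,a)))^2 + (cmod (Q $$ (a,b)))^2) / 2)"
  proof (intro sum_mono)
    fix a b
    have "0 \<le> (cmod (P $$ (b,a)) - cmod (Q $$ (a,b)))^2" by simp
    then show "cmod (cnj (P $$ (b,a)) * Q $$ (a,b)) \<le> ((cmod (P $$ (b,a)))^2 + (cmod (Q $$ (a,b)))^2) / 2"
      by (simp add: norm_mult power2_eq_square algebra_simps)
  qed
  also have "\<dots> = ((\<Sum>a<m. \<Sum>b<m. (cmod (P $$ (b,a)))^2) + (\<Sum>a<m. \<Sum>b<m. (cmod (Q $$ (a,b)))^2)) / 2"
    by (simp add: sum.distrib sum_divide_distrib add_divide_distrib)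
  also have "(\<Sum>a<m. \<Sum>b<m. (cmod (Q $$ (a,b)))^2) = (\<Sum>i<m. \<Sum>j<m. (cmod (Q $$ (j,i)))^2)"
    by (rule sum.swap)
  also have "\<dots> = real m" by (rule norm_sq_sum[OF Q hQ m])
  also have "(\<Sum>a<m. \<Sum>b<m. (cmod (P $$ (b,a)))^2) = real m" by (rule norm_sq_sum[OF P hP m])
  finally show ?thesis by simp
qed

definition dmat :: "nat \<Rightarrow> complex mat" where
  "dmat m = mat m m (\<lambda>(i,j). if i = j then (if i = 0 then complex_of_real (sqrt (real m / 2))
      else if i = 1 then - complex_of_real (sqrt (real m / 2)) else 0) else 0)"

lemma dmat_props:
  assumes m: "m > 1"
  shows "dmat m \<in> carrier_mat m m" "mtrace (dmat m) = 0"
    "mtrace (adj (dmat m) * dmat m) / of_nat m = 1"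
    "(\<Sum>a<m. \<Sum>b<m. cnj (dmat m $$ (b,a)) * dmat m $$ (a,b)) = of_nat m"
proof -
  define c where "c = complex_of_real (sqrt (real m / 2))"
  define d where "d = (\<lambda>i::nat. if i = 0 then c else if i = 1 then - c else 0)"
  obtain k where k: "m = Suc (Suc k)" using m by (metis less_imp_Suc_add plus_1_eq_Suc add_Suc_right)
  have D: "dmat m = mat m m (\<lambda>(i,j). if i = j then d i else 0)"
    unfolding dmat_def d_def c_def by simp
  show C: "dmat m \<in> carrier_mat m m" unfolding D by simp
  have sd: "(\<Sum>i<m. f i) = f 0 + f 1 + (\<Sum>i<k. f (Suc (Suc i)))" for f :: "nat \<Rightarrow> complex"
    unfolding k sum.lessThan_Suc_shift by (simp add: add_ac)
  show "mtrace (dmat m) = 0" unfolding mtrace_def using C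
    by (simp add: D sd d_def)
  have cc: "cnj c * c = of_nat m / 2"
  proof -
    have "cnj c * c = complex_of_real (sqrt (real m / 2) * sqrt (real m / 2))"
      by (simp only: c_def complex_cnj_complex_of_real of_real_mult)
    also have "\<dots> = of_nat m / 2" by (simp only: real_sqrt_mult_self) simp
    finally show ?thesis .
  qed
  have cc2: "complex_of_real (sqrt (real m / 2)) * complex_of_real (sqrt (real m / 2)) * 2 = of_nat m"
  proof -
    have "complex_of_real (sqrt (real m / 2)) * complex_of_real (sqrt (real m / 2)) * 2
       = complex_of_real (sqrt (real m / 2) * sqrt (real m / 2) * 2)" by (simp only: of_real_mult of_real_numeral)
    also have "\<dots> = of_nat m" by (simp only: real_sqrt_mult_self) simp
    finally show ?thesis .
  qed
  have dd: "(\<Sum>i<m. cnj (d i) * d i) = of_nat m"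
    using cc2 by (simp add: sd d_def cc)
  have "(\<Sum>a<m. \<Sum>b<m. cnj (dmat m $$ (b,a)) * dmat m $$ (a,b)) = (\<Sum>a<m. cnj (d a) * d a)"
    by (simp add: D if_mult0 sum.delta sum.delta' cong: if_cong)
  then show "(\<Sum>a<m. \<Sum>b<m. cnj (dmat m $$ (b,a)) * dmat m $$ (a,b)) = of_nat m" using dd by simp
  have "mtrace (adj (dmat m) * dmat m) = (\<Sum>i<m. \<Sum>j<m. cnj (dmat m $$ (j,i)) * dmat m $$ (j,i))"
    using C by (subst trace_mult[of _ m m]) auto
  also have "\<dots> = (\<Sum>a<m. cnj (d a) * d a)"
    by (simp add: D if_mult0 sum.delta sum.delta' cong: if_cong)
  finally show "mtrace (adj (dmat m) * dmat m) / of_nat m = 1" using dd m by simp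
qed

theorem lemma3p9:
  fixes \<epsilon> :: real and m :: nat
  assumes "0 \<le> \<epsilon>" and "\<epsilon> < 1" and "m > 1"
  shows "max_corr m
     (complex_of_real (1 - \<epsilon>) \<cdot>\<^sub>m proj (max_ent m)
      + complex_of_real \<epsilon> \<cdot>\<^sub>m kron ((1 / of_nat m) \<cdot>\<^sub>m 1\<^sub>m m) ((1 / of_nat m) \<cdot>\<^sub>m 1\<^sub>m m))
     = 1 - \<epsilon>"
proof -
  let ?psi = "complex_of_real (1 - \<epsilon>) \<cdot>\<^sub>m proj (max_ent m)
      + complex_of_real \<epsilon> \<cdot>\<^sub>m kron ((1 / of_nat m) \<cdot>\<^sub>m 1\<^sub>m m) ((1 / of_nat m) \<cdot>\<^sub>m 1\<^sub>m m)"
  define X where "X = {cmod (mtrace (kron (adj P) Q * ?psi)) | P Q.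
      P \<in> carrier_mat m m \<and> Q \<in> carrier_mat m m \<and> mtrace P = 0 \<and> mtrace Q = 0 \<and>
      mtrace (adj P * P) / of_nat m = 1 \<and> mtrace (adj Q * Q) / of_nat m = 1}"
  have m0: "m > 0" using assms by simp
  have val: "cmod (mtrace (kron (adj P) Q * ?psi)) = (1 - \<epsilon>) / m * cmod (\<Sum>a<m. \<Sum>b<m. cnj (P $$ (b,a)) * Q $$ (a,b))"
    if "P \<in> carrier_mat m m" "Q \<in> carrier_mat m m" "mtrace P = 0" for P Q
    unfolding main_formula[OF that m0, where e = \<epsilon>] norm_mult norm_of_real using assms by simp
  have ub: "x \<le> 1 - \<epsilon>" if "x \<in> X" for x
  proof -
    from that obtain P Q where PQ: "P \<in> carrier_mat m m" "Q \<in> carrier_mat m m" "mtrace P = 0"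
      "mtrace (adj P * P) / of_nat m = 1" "mtrace (adj Q * Q) / of_nat m = 1"
      and x: "x = cmod (mtrace (kron (adj P) Q * ?psi))" unfolding X_def by blast
    have b: "cmod (\<Sum>a<m. \<Sum>b<m. cnj (P $$ (b,a)) * Q $$ (a,b)) \<le> real m"
      by (rule S_bound[OF PQ(1,4,2,5) m0])
    have "x = (1 - \<epsilon>) / m * cmod (\<Sum>a<m. \<Sum>b<m. cnj (P $$ (b,a)) * Q $$ (a,b))"
      using x val[OF PQ(1-3)] by simp
    also have "\<dots> \<le> (1 - \<epsilon>) / m * real m"
      using b assms by (intro mult_left_mono) auto
    also have "\<dots> = 1 - \<epsilon>" using m0 by simp
    finally show ?thesis .
  qed
  have mem: "1 - \<epsilon> \<in> X"
  proof -
    note D = dmat_props[OF assms(3)]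
    have h: "cmod (mtrace (kron (adj (dmat m)) (dmat m) * ?psi)) = 1 - \<epsilon>"
      using val[OF D(1) D(1) D(2)] D(4) m0 assms by simp
    show ?thesis unfolding X_def mem_Collect_eq
      by (rule exI[of _ "dmat m"], rule exI[of _ "dmat m"]) (use h D in auto)
  qed
  have "max_corr m ?psi = Sup X" unfolding max_corr_def X_def by simp
  also have "\<dots> = 1 - \<epsilon>" using mem ub by (intro cSup_eq_maximum) auto
  finally show ?thesis .
qed

end
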